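(* Let $f:\mathbb{R}^n\to\mathbb{R}$ be strongly convex with constant $\mu\ge0$, and let $\gamma_k>0$, $\delta_k>0$, $s_k>0$ for all $k$. Then the iterates of the random incremental penalty method surely satisfy, for all $y\in X$ and $k\ge1$, $$\|x_{k+1}-y\|^2\le(1-\mu s_k)\|x_k-y\|^2+2s_k\big(f(y)-f(x_k)\big)+\frac{s_k\gamma_k\delta_k}{2\alpha_{\min}}-2s_k\gamma_k\,\mathrm{dist}(x_k,X_{i_k})+s_k^2\big(\|\tilde\nabla f(x_k)\|+\gamma_k\big)^2.$$
   Context: Let $a_1,\dots,a_m\in\mathbb{R}^n$ be nonzero vectors and $b_1,\dots,b_m\in\mathbb{R}$; $X_i=\{x:\langle a_i,x\rangle-b_i\le0\}$, $X=\bigcap_{i=1}^mX_i$ (assumed nonempty), $\alpha_{\min}=\min_i\|a_i\|$. Strong convexity with constant $\mu\ge0$ means $f(u)\ge f(v)+\langle g,u-v\rangle+\frac{\mu}{2}\|u-v\|^2$ for all $u,v$ and all $g\in\partial f(v)$ ($\mu=0$: convex). For $\delta>0$, nonzero $a$ and scalar $b$: $h_\delta(x;a,b)=\frac{\langle a,x\rangle-b}{\|a\|}$ if $\langle a,x\rangle-b>\delta$, $\frac{(\langle a,x\rangle-b+\delta)^2}{4\delta\|a\|}$ if $-\delta\le\langle a,x\rangle-b\le\delta$, $0$ if $\langle a,x\rangle-b<-\delta$; its gradient is $\nabla h_\delta(x;a,b)=\frac{1}{\|a\|}p'_\delta(\langle a,x\rangle-b)\,a$ with $p'_\delta(s)=1$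 for $s>\delta$, $\frac{s+\delta}{2\delta}$ for $|s|\le\delta$, $0$ for $s<-\delta$. Random incremental penalty method: from an initial point $x_1$, for $k\ge1$, $x_{k+1}=x_k-s_k\big[\tilde\nabla f(x_k)+\gamma_k\nabla h_{\delta_k}(x_k;a_{i_k},b_{i_k})\big]$, where $\tilde\nabla f(x_k)\in\partial f(x_k)$ and $i_k\in\{1,\dots,m\}$ is chosen uniformly at random. *)

theory Defs
  imports "HOL-Analysis.Analysis"
begin

definition subdiff :: "('a::euclidean_space \<Rightarrow> real) \<Rightarrow> 'a \<Rightarrow> 'a set" where
  "subdiff f v = {g. \<forall>u. f u \<ge> f v + inner g (u - v)}"

definition strongly_convex :: "('a::euclidean_space \<Rightarrow> real) \<Rightarrow> real \<Rightarrow> bool" where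
  "strongly_convex f \<mu> \<longleftrightarrow>
     (\<forall>u v g. g \<in> subdiff f v \<longrightarrow> f u \<ge> f v + inner g (u - v) + \<mu> / 2 * (norm (u - v))^2)"

definition h_pen :: "real \<Rightarrow> 'a::euclidean_space \<Rightarrow> 'a \<Rightarrow> real \<Rightarrow> real" where
  "h_pen \<delta> x a b =
     (let s = inner a x - b in
      if s > \<delta> then s / norm a
      else if -\<delta> \<le> s then (s + \<delta>)^2 / (4 * \<delta> * norm a)
      else 0)"

definition p_pen' :: "real \<Rightarrow> real \<Rightarrow> real" where
  "p_pen' \<delta> s = (if s > \<delta> then 1 else if -\<delta> \<le> s then (s + \<delta>) / (2 * \<delta>) else 0)"

definition grad_h_pen :: "real \<Rightarrow> 'a::euclidean_space \<Rightarrow> 'a \<Rightarrow> real \<Rightarrow> 'a" where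
  "grad_h_pen \<delta> x a b = (p_pen' \<delta> (inner a x - b) / norm a) *\<^sub>R a"

end

theory Submission
  imports Defs
begin

lemma pen_aux:
  fixes t d :: real assumes "d > 0"
  shows "p_pen' d t * t \<ge> max t 0 - d / 4" and "0 \<le> p_pen' d t" and "p_pen' d t \<le> 1"
proof -
  show "p_pen' d t * t \<ge> max t 0 - d / 4"
  proof (cases "t > d")
    case True then show ?thesis using assms by (simp add: p_pen'_def)
  next
    case f: False
    show ?thesis
    proof (cases "-d \<le> t")
      case True
      have e: "p_pen' d t * t = (t + d) * t / (2 * d)" using f True by (simp add: p_pen'_def)
      have "max t 0 - d / 4 \<le> (t + d) * t / (2 * d)"
      proof (cases "t \<ge> 0")
        case True
        have q: "(t + d) * t - (2*d) * (t - d/4) = (t - d/2)^2 + d^2/4"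
          by (simp add: power2_eq_square algebra_simps)
        have "(t - d/2)^2 + d^2/4 \<ge> 0" by simp
        then have "(2*d) * (t - d/4) \<le> (t + d) * t" using q by linarith
        then show ?thesis using True assms by (simp add: field_simps)
      next
        case False
        have q: "(t + d) * t - (2*d) * (0 - d/4) = (t + d/2)^2 + d^2/4"
          by (simp add: power2_eq_square algebra_simps)
        have "(t + d/2)^2 + d^2/4 \<ge> 0" by simp
        then have "(2*d) * (0 - d/4) \<le> (t + d) * t" using q by linarith
        then show ?thesis using False assms by (simp add: field_simps)
      qed
      then show ?thesis using e by simp
    next
      case False then show ?thesis using f assms by (simp add: p_pen'_def)
    qed
  qed
  show "0 \<le> p_pen' d t" using assms by (simp add: p_pen'_def)
  show "p_pen' d t \<le> 1" using assms by (simp add: p_pen'_def)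
qed

lemma infdist_half:
  fixes A x :: "'a::euclidean_space" assumes "A \<noteq> 0"
  shows "infdist x {z. inner A z - c \<le> 0} \<le> max (inner A x - c) 0 / norm A"
proof (cases "inner A x - c \<le> 0")
  case True
  then have "infdist x {z. inner A z - c \<le> 0} = 0" by (simp add: infdist_zero)
  then show ?thesis using True by simp
next
  case False
  define t where "t = inner A x - c"
  define z where "z = x - (t / (norm A)^2) *\<^sub>R A"
  have n: "norm A > 0" using assms by simp
  have "inner A z - c = 0" using n unfolding z_def t_def
    by (simp add: inner_diff_right power2_norm_eq_inner[symmetric] field_simps)
  then have zin: "z \<in> {z. inner A z - c \<le> 0}" by simp
  have "dist x z = t / norm A" using n False unfolding z_def t_def
    by (simp add: dist_norm power2_eq_square field_simps)
  then show ?thesis using infdist_le[OF zin, of x] False t_def by simp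
qed

theorem lemma8:
  fixes f :: "'a::euclidean_space \<Rightarrow> real"
    and m :: nat and a :: "nat \<Rightarrow> 'a" and b :: "nat \<Rightarrow> real"
    and \<mu> :: real and \<gamma> \<delta> s :: "nat \<Rightarrow> real"
    and x g :: "nat \<Rightarrow> 'a" and ii :: "nat \<Rightarrow> nat" and y :: 'a and k :: nat
  assumes a_nz: "\<forall>j\<in>{1..m}. a j \<noteq> 0"
    and X_ne: "{z. \<forall>j\<in>{1..m}. inner (a j) z - b j \<le> 0} \<noteq> {}"
    and mu: "\<mu> \<ge> 0"
    and sc: "strongly_convex f \<mu>"
    and pos: "\<forall>k\<ge>1. \<gamma> k > 0 \<and> \<delta> k > 0 \<and> s k > 0"
    and idx: "\<forall>k\<ge>1. ii k \<in> {1..m}"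
    and subg: "\<forall>k\<ge>1. g k \<in> subdiff f (x k)"
    and iter: "\<forall>k\<ge>1. x (Suc k) = x k - s k *\<^sub>R (g k + \<gamma> k *\<^sub>R grad_h_pen (\<delta> k) (x k) (a (ii k)) (b (ii k)))"
    and yX: "y \<in> {z. \<forall>j\<in>{1..m}. inner (a j) z - b j \<le> 0}"
    and k: "k \<ge> 1"
  shows "(norm (x (Suc k) - y))^2
    \<le> (1 - \<mu> * s k) * (norm (x k - y))^2 + 2 * s k * (f y - f (x k))
       + s k * \<gamma> k * \<delta> k / (2 * Min ((\<lambda>j. norm (a j)) ` {1..m}))
       - 2 * s k * \<gamma> k * infdist (x k) {z. inner (a (ii k)) z - b (ii k) \<le> 0}
       + (s k)^2 * (norm (g k) + \<gamma> k)^2"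
proof -
  define A where "A = a (ii k)"
  define B where "B = b (ii k)"
  define t where "t = inner A (x k) - B"
  define p where "p = p_pen' (\<delta> k) t"
  define G where "G = (p / norm A) *\<^sub>R A"
  define d where "d = g k + \<gamma> k *\<^sub>R G"
  define am where "am = Min ((\<lambda>j. norm (a j)) ` {1..m})"
  define D where "D = infdist (x k) {z. inner A z - B \<le> 0}"
  have ik: "ii k \<in> {1..m}" using idx k by auto
  have An: "A \<noteq> 0" using a_nz ik A_def by auto
  have nA: "norm A > 0" using An by simp
  have gp: "\<gamma> k > 0" "\<delta> k > 0" "s k > 0" using pos k by auto
  have am_le: "am \<le> norm A" unfolding am_def A_def using ik by (intro Min_le) auto
  have am_pos: "am > 0" unfolding am_def using a_nz ik
    by (subst Min_gr_iff) auto
  have pa: "p * t \<ge> max t 0 - \<delta> k / 4" "0 \<le> p" "p \<le> 1"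
    using pen_aux[OF gp(2)] p_def by auto
  have xs: "x (Suc k) - y = (x k - y) - s k *\<^sub>R d"
    using iter k unfolding d_def G_def p_def t_def A_def B_def grad_h_pen_def by simp
  have e1: "(norm (x (Suc k) - y))^2 = (norm (x k - y))^2 - 2 * s k * inner d (x k - y) + (s k)^2 * (norm d)^2"
    unfolding xs power2_norm_eq_inner by (simp add: inner_diff_left inner_diff_right inner_commute algebra_simps power2_eq_square)
  have nG: "norm G = p" unfolding G_def using nA pa by simp
  have nd: "norm d \<le> norm (g k) + \<gamma> k"
  proof -
    have "norm d \<le> norm (g k) + norm (\<gamma> k *\<^sub>R G)" unfolding d_def by (rule norm_triangle_ineq)
    also have "norm (\<gamma> k *\<^sub>R G) \<le> \<gamma> k" using nG pa gp by (simp add: mult_left_le)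
    finally show ?thesis by simp
  qed
  have nd2: "(norm d)^2 \<le> (norm (g k) + \<gamma> k)^2" using nd by (simp add: power_mono)
  have sg: "g k \<in> subdiff f (x k)" using subg k by auto
  have e3: "f y \<ge> f (x k) + inner (g k) (y - x k) + \<mu> / 2 * (norm (y - x k))^2"
    using sc sg unfolding strongly_convex_def by blast
  have e3': "inner (g k) (x k - y) \<ge> f (x k) - f y + \<mu> / 2 * (norm (x k - y))^2"
    using e3 by (simp add: inner_diff_right norm_minus_commute)
  have yA: "inner A y \<le> B" using yX ik unfolding A_def B_def by auto
  have e4: "inner G (x k - y) \<ge> p * t / norm A"
  proof -
    have "inner G (x k - y) = p / norm A * (inner A (x k) - inner A y)"
      unfolding G_def by (simp add: inner_diff_right diff_divide_distrib right_diff_distrib)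
    moreover have "inner A (x k) - inner A y \<ge> t" using yA t_def by simp
    ultimately show ?thesis using pa nA by (simp add: mult_left_mono divide_right_mono)
  qed
  have e6: "D \<le> max t 0 / norm A" unfolding D_def t_def by (rule infdist_half[OF An])
  have e5: "inner G (x k - y) \<ge> D - \<delta> k / (4 * am)"
  proof -
    have "p * t / norm A \<ge> (max t 0 - \<delta> k / 4) / norm A" using pa nA by (simp add: divide_right_mono)
    moreover have "(max t 0 - \<delta> k / 4) / norm A = max t 0 / norm A - \<delta> k / (4 * norm A)"
      by (simp add: diff_divide_distrib)
    moreover have "\<delta> k / (4 * norm A) \<le> \<delta> k / (4 * am)" using am_le am_pos gp
      by (simp add: frac_le)
    ultimately show ?thesis using e4 e6 by linarith
  qed
  have dd: "inner d (x k - y) = inner (g k) (x k - y) + \<gamma> k * inner G (x k - y)"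
    unfolding d_def by (simp add: inner_add_left)
  define N where "N = (norm (x k - y))^2"
  define Ig where "Ig = inner (g k) (x k - y)"
  define IG where "IG = inner G (x k - y)"
  have c0: "s k * inner d (x k - y) = s k * Ig + s k * \<gamma> k * IG"
    unfolding dd Ig_def IG_def by (simp add: algebra_simps)
  have c1: "s k * Ig \<ge> s k * f (x k) - s k * f y + (\<mu> * s k) * N / 2"
  proof -
    have "s k * Ig \<ge> s k * (f (x k) - f y + \<mu> / 2 * N)"
      using e3' gp unfolding Ig_def N_def by (simp add: mult_left_mono)
    moreover have "s k * (f (x k) - f y + \<mu> / 2 * N) = s k * f (x k) - s k * f y + (\<mu> * s k) * N / 2"
      by (simp add: algebra_simps)
    ultimately show ?thesis by linarith
  qed
  have c2: "s k * \<gamma> k * IG \<ge> s k * \<gamma> k * D - s k * \<gamma> k * \<delta> k / (2 * am) / 2"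
  proof -
    have "s k * \<gamma> k * IG \<ge> s k * \<gamma> k * (D - \<delta> k / (4 * am))"
      using e5 gp unfolding IG_def by (simp add: mult_left_mono)
    moreover have "s k * \<gamma> k * (D - \<delta> k / (4 * am)) = s k * \<gamma> k * D - s k * \<gamma> k * \<delta> k / (2 * am) / 2"
      by (simp add: field_simps)
    ultimately show ?thesis by linarith
  qed
  have c3: "(s k)^2 * (norm d)^2 \<le> (s k)^2 * (norm (g k) + \<gamma> k)^2"
    using nd2 by (simp add: mult_left_mono)
  have e1': "(norm (x (Suc k) - y))^2 = N - 2 * (s k * inner d (x k - y)) + (s k)^2 * (norm d)^2"
    using e1 unfolding N_def by simp
  have fin: "\<And>N' N SI S2nd2 SIg SGIG A B C E F H :: real.
      N' = N - 2 * SI + S2nd2 \<Longrightarrow> SI = SIg + SGIG \<Longrightarrow> SIg \<ge> A - B + C / 2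
      \<Longrightarrow> SGIG \<ge> E - F / 2 \<Longrightarrow> S2nd2 \<le> H \<Longrightarrow> N' \<le> N - C + 2 * B - 2 * A + F - 2 * E + H"
    by linarith
  have "(norm (x (Suc k) - y))^2 \<le> N - (\<mu> * s k) * N + 2 * (s k * f y) - 2 * (s k * f (x k))
       + s k * \<gamma> k * \<delta> k / (2 * am) - 2 * (s k * \<gamma> k * D) + (s k)^2 * (norm (g k) + \<gamma> k)^2"
    by (rule fin[OF e1' c0 c1 c2 c3])
  moreover have "N - (\<mu> * s k) * N + 2 * (s k * f y) - 2 * (s k * f (x k))
       + s k * \<gamma> k * \<delta> k / (2 * am) - 2 * (s k * \<gamma> k * D) + (s k)^2 * (norm (g k) + \<gamma> k)^2
     = (1 - \<mu> * s k) * N + 2 * s k * (f y - f (x k))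
       + s k * \<gamma> k * \<delta> k / (2 * am) - 2 * s k * \<gamma> k * D + (s k)^2 * (norm (g k) + \<gamma> k)^2"
    by (simp add: algebra_simps)
  ultimately have "(norm (x (Suc k) - y))^2 \<le> (1 - \<mu> * s k) * N + 2 * s k * (f y - f (x k))
       + s k * \<gamma> k * \<delta> k / (2 * am) - 2 * s k * \<gamma> k * D + (s k)^2 * (norm (g k) + \<gamma> k)^2"
    by simp
  then show ?thesis unfolding am_def D_def A_def B_def N_def .
qed

end
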